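(* Let $v\equiv 3$ or $15\pmod{18}$ with $v>3$, and let $S=(\mathbb{Z}_v,\mathcal{B})$ be a cyclic $\mathrm{STS}(v)$ (with cyclic automorphism $i\mapsto i+1\bmod v$). Then $S$ admits a zero-sum $4$-flow. Moreover, if $S$ has a full orbit of Type $1$ or of Type $3$, then $S$ admits a zero-sum $3$-flow.
   Context: A Steiner triple system $\mathrm{STS}(v)$ is a pair $(X,\mathcal{B})$ with $|X|=v$ and $\mathcal{B}$ a collection of 3-subsets of $X$ such that every 2-subset lies in exactly one block. It is cyclic if (after relabeling) $X=\mathbb{Z}_v$ and $\alpha:i\mapsto i+1\pmod v$ maps blocks to blocks. Blocks are partitioned into orbits under $\langle\alpha\rangle$; an orbit of size $v$ is a full orbit, and for $v\equiv3\pmod6$ there is exactly one other (short) orbit, that of $\{0,v/3,2v/3\}$. When $3\mid v$, an orbit is of Type $i$ ($i=1,2,3$) if each of its blocks contains elements of exactly $i$ distinct residue classes mod $3$. For integer $n\ge2$, a zero-sum $n$-flow is a map $f:\mathcal{B}\to\{\pm1,\ldots,\pm(n-1)\}$ with $\sum_{B\ni x} f(B)=0$ for every point $x$. *)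

theory Defs
  imports Main
begin

definition is_STS :: "nat \<Rightarrow> nat set set \<Rightarrow> bool" where
  "is_STS v B \<longleftrightarrow>
     (\<forall>b\<in>B. b \<subseteq> {..<v} \<and> card b = 3) \<and>
     (\<forall>x\<in>{..<v}. \<forall>y\<in>{..<v}. x \<noteq> y \<longrightarrow> (\<exists>!b. b \<in> B \<and> {x, y} \<subseteq> b))"

definition shift :: "nat \<Rightarrow> nat \<Rightarrow> nat \<Rightarrow> nat" where
  "shift v k i = (i + k) mod v"

definition is_cyclic_STS :: "nat \<Rightarrow> nat set set \<Rightarrow> bool" where
  "is_cyclic_STS v B \<longleftrightarrow> is_STS v B \<and> (\<forall>b\<in>B. shift v 1 ` b \<in> B)"

definition block_orbit :: "nat \<Rightarrow> nat set \<Rightarrow> nat set set" where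
  "block_orbit v b = {shift v k ` b | k. k < v}"

definition full_orbit :: "nat \<Rightarrow> nat set set \<Rightarrow> nat set set \<Rightarrow> bool" where
  "full_orbit v B Orb \<longleftrightarrow> (\<exists>b\<in>B. Orb = block_orbit v b) \<and> card Orb = v"

definition orbit_of_type :: "nat \<Rightarrow> nat set set \<Rightarrow> bool" where
  "orbit_of_type i Orb \<longleftrightarrow> (\<forall>b\<in>Orb. card ((\<lambda>x. x mod 3) ` b) = i)"

definition zero_sum_flow :: "nat \<Rightarrow> nat \<Rightarrow> nat set set \<Rightarrow> (nat set \<Rightarrow> int) \<Rightarrow> bool" where
  "zero_sum_flow n v B f \<longleftrightarrow>
     (\<forall>b\<in>B. f b \<noteq> 0 \<and> \<bar>f b\<bar> \<le> int n - 1) \<and>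
     (\<forall>x\<in>{..<v}. (\<Sum>b\<in>{b\<in>B. x \<in> b}. f b) = 0)"

definition admits_zero_sum_flow :: "nat \<Rightarrow> nat \<Rightarrow> nat set set \<Rightarrow> bool" where
  "admits_zero_sum_flow n v B \<longleftrightarrow> (\<exists>f. zero_sum_flow n v B f)"

end

theory Submission
  imports Defs "HOL-Number_Theory.Cong"
begin

definition dd :: "nat \<Rightarrow> nat \<Rightarrow> nat \<Rightarrow> nat" where "dd v u w = (w + v - u) mod v"
definition ud :: "nat \<Rightarrow> nat \<Rightarrow> nat \<Rightarrow> nat" where "ud v u w = min (dd v u w) (dd v w u)"
definition blk :: "nat set set \<Rightarrow> nat \<Rightarrow> nat \<Rightarrow> nat set" where
  "blk B x y = (THE b. b \<in> B \<and> x \<in> b \<and> y \<in> b)"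
definition offd :: "nat set \<Rightarrow> (nat \<times> nat) set" where "offd A = {p \<in> A \<times> A. fst p \<noteq> snd p}"
definition pe :: "nat \<Rightarrow> (nat \<Rightarrow> int) \<Rightarrow> nat \<Rightarrow> nat \<Rightarrow> int" where
  "pe v E u w = (if dd v u w \<le> v div 2 then E (dd v u w) else 0)"
definition gE :: "nat \<Rightarrow> (nat \<Rightarrow> int) \<Rightarrow> nat set \<Rightarrow> int" where
  "gE v E b = (\<Sum>p\<in>offd b. pe v E (fst p) (snd p))"
definition short :: "nat \<Rightarrow> nat set \<Rightarrow> bool" where "short v b \<longleftrightarrow> shift v (v div 3) ` b = b"
definition Rset :: "nat \<Rightarrow> nat set set \<Rightarrow> (nat set \<Rightarrow> bool) \<Rightarrow> nat set" where
  "Rset v B P = {d \<in> {1..v div 2}. P (blk B 0 d) \<and>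
      (\<forall>u\<in>blk B 0 d. \<forall>w\<in>blk B 0 d. u \<noteq> w \<longrightarrow> d \<le> ud v u w)}"

lemma mod_cancel: "(a + b) mod (v::nat) = (a + c) mod v \<Longrightarrow> b mod v = c mod v"
  by (metis cong_add_lcancel_nat cong_def)

lemma dd_lt: "0 < v \<Longrightarrow> dd v u w < v" by (simp add: dd_def)

lemma dd_add: "u < v \<Longrightarrow> w < v \<Longrightarrow> (u + dd v u w) mod v = w"
proof -
  assume a: "u < v" "w < v"
  have "(u + dd v u w) mod v = (u + (w + v - u)) mod v" by (simp add: dd_def mod_add_right_eq)
  also have "u + (w + v - u) = w + v" using a by simp
  finally show ?thesis using a by simp
qed

lemma dd_unique: "u < v \<Longrightarrow> \<delta> < v \<Longrightarrow> w < v \<Longrightarrow> (u + \<delta>) mod v = w \<Longrightarrow> dd v u w = \<delta>"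
proof -
  assume a: "u < v" "\<delta> < v" "w < v" "(u + \<delta>) mod v = w"
  then have "(u + dd v u w) mod v = (u + \<delta>) mod v" using dd_add by simp
  then have "dd v u w mod v = \<delta> mod v" by (rule mod_cancel)
  then show ?thesis using a dd_lt[of v u w] by simp
qed

lemma add_unique1: fixes u v u' \<delta> :: nat shows "u < v \<Longrightarrow> u' < v \<Longrightarrow> (u + \<delta>) mod v = (u' + \<delta>) mod v \<Longrightarrow> u = u'"
  using mod_cancel[of \<delta> u v u'] by (simp add: add.commute)

lemma dd_nz: "u < v \<Longrightarrow> w < v \<Longrightarrow> u \<noteq> w \<Longrightarrow> dd v u w \<noteq> 0"
  using dd_add[of u v w] by (cases "dd v u w") auto

lemma dd_sum: "u < v \<Longrightarrow> w < v \<Longrightarrow> u \<noteq> w \<Longrightarrow> dd v u w + dd v w u = v"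
proof -
  assume a: "u < v" "w < v" "u \<noteq> w"
  have "(u + (dd v u w + dd v w u)) mod v = ((u + dd v u w) mod v + dd v w u) mod v"
    by (simp add: mod_add_left_eq add.assoc)
  also have "\<dots> = u" using a by (simp add: dd_add)
  finally have "(u + (dd v u w + dd v w u)) mod v = (u + 0) mod v" using a by simp
  from mod_cancel[OF this] have "(dd v u w + dd v w u) mod v = 0" by simp
  moreover have "dd v u w < v" "dd v w u < v" using a dd_lt by auto
  moreover have "dd v u w \<noteq> 0" "dd v w u \<noteq> 0" using a dd_nz by auto
  ultimately have s: "(dd v u w + dd v w u) mod v = 0" "0 < dd v u w + dd v w u"
     "dd v u w + dd v w u < 2 * v" by auto
  then obtain q where q: "dd v u w + dd v w u = v * q" by (metis mod_eq_0_iff_dvd dvd_def)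
  have "q < 2" using s(3) q by (metis mult.commute mult_less_cancel2)
  moreover have "q \<noteq> 0" using s(2) q by auto
  ultimately have "q = 1" by arith
  then show ?thesis using q by simp
qed

lemma shift_shift: "shift v j (shift v k y) = shift v (k + j) y"
  by (simp add: shift_def mod_add_left_eq add.assoc)

lemma shift_lt: "0 < v \<Longrightarrow> shift v k y < v" by (simp add: shift_def)

lemma shift_0: "y < v \<Longrightarrow> shift v 0 y = y" by (simp add: shift_def)

lemma shift_back: "y < v \<Longrightarrow> shift v (v - k mod v) (shift v k y) = y"
proof -
  assume a: "y < v"
  have m: "k mod v < v" using a by simp
  have e: "v * (k div v) + k mod v = k" by (rule mult_div_mod_eq)
  have "k + (v - k mod v) = v * (k div v) + v" using m e by linarith
  then have eq: "k + (v - k mod v) = v * (k div v + 1)" by simp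
  have "shift v (v - k mod v) (shift v k y) = shift v (k + (v - k mod v)) y" by (rule shift_shift)
  also have "\<dots> = (y + v * (k div v + 1)) mod v" by (simp only: shift_def eq)
  also have "\<dots> = y" using a by (metis mod_mult_self2 mod_less)
  finally show ?thesis .
qed


lemma add_mod_self_iff: "x < (v::nat) \<Longrightarrow> (x + j) mod v = x \<longleftrightarrow> j mod v = 0"
proof
  assume a: "x < v" "(x + j) mod v = x"
  then have "(x + j) mod v = (x + 0) mod v" by simp
  from mod_cancel[OF this] show "j mod v = 0" by simp
next
  assume a: "x < v" "j mod v = 0"
  then show "(x + j) mod v = x" by (metis add.right_neutral mod_add_right_eq mod_less)
qed

locale csts =
  fixes v :: nat and B :: "nat set set"
  assumes cyc: "is_cyclic_STS v B" and v6: "v mod 6 = 3" and v3: "v > 3"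
begin

definition m :: nat where "m = v div 3"
definition N :: nat where "N = v div 2"

lemma v_pos: "0 < v" using v3 by simp
lemma v_m: "v = 3 * m" unfolding m_def using v6 by presburger
lemma v_N: "v = 2 * N + 1" unfolding N_def using v6 by presburger
lemma m_ge: "m \<ge> 3" unfolding m_def using v6 v3 by presburger
lemma N_mod: "N mod 3 = 1" unfolding N_def using v6 by presburger
lemma N_ge: "N \<ge> 1" using v_N v3 by simp

lemma STS: "is_STS v B" using cyc by (simp add: is_cyclic_STS_def)

lemma blockD: assumes "b \<in> B" shows "b \<subseteq> {..<v}" "card b = 3" "finite b"
  using STS assms unfolding is_STS_def by (auto intro: card_ge_0_finite)

lemma finB: "finite B"
proof -
  have "B \<subseteq> Pow {..<v}" using blockD by auto
  then show ?thesis by (rule finite_subset) simp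
qed

lemma exblk: "x < v \<Longrightarrow> y < v \<Longrightarrow> x \<noteq> y \<Longrightarrow> \<exists>!b. b \<in> B \<and> x \<in> b \<and> y \<in> b"
  using STS unfolding is_STS_def by auto

lemma uniq: "b \<in> B \<Longrightarrow> b' \<in> B \<Longrightarrow> x \<in> b \<Longrightarrow> y \<in> b \<Longrightarrow> x \<in> b' \<Longrightarrow> y \<in> b' \<Longrightarrow> x \<noteq> y \<Longrightarrow> b = b'"
  using exblk[of x y] blockD(1)[of b] by auto

lemma blk: "x < v \<Longrightarrow> y < v \<Longrightarrow> x \<noteq> y \<Longrightarrow> blk B x y \<in> B \<and> x \<in> blk B x y \<and> y \<in> blk B x y"
  unfolding blk_def using theI'[OF exblk] by blast

lemma blk_eq: "b \<in> B \<Longrightarrow> x \<in> b \<Longrightarrow> y \<in> b \<Longrightarrow> x \<noteq> y \<Longrightarrow> blk B x y = b"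
  using blk[of x y] uniq[of b "blk B x y" x y] blockD(1)[of b] by auto

lemma shift_img_shift: "shift v j ` shift v k ` b = shift v (k + j) ` b"
  by (simp add: image_image shift_shift)

lemma shift_img_0: "b \<subseteq> {..<v} \<Longrightarrow> shift v 0 ` b = b"
  by (force simp: shift_def image_iff subset_iff)

lemma shift_img_v: "b \<subseteq> {..<v} \<Longrightarrow> shift v v ` b = b"
  by (force simp: shift_def image_iff subset_iff)

lemma shift_img_back: "b \<subseteq> {..<v} \<Longrightarrow> shift v (v - k mod v) ` shift v k ` b = b"
proof -
  assume a: "b \<subseteq> {..<v}"
  have "shift v (v - k mod v) ` shift v k ` b = (\<lambda>y. shift v (v - k mod v) (shift v k y)) ` b"
    by (simp add: image_image)
  also have "\<dots> = b" using a shift_back by (force simp: image_iff subset_iff)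
  finally show ?thesis .
qed

lemma shift_img_mod: "shift v k ` b = shift v (k mod v) ` b"
  by (simp add: shift_def mod_add_right_eq)

lemma shift_sub: "shift v k ` b \<subseteq> {..<v}" using shift_lt v_pos by auto

lemma shift_mem: "b \<in> B \<Longrightarrow> shift v k ` b \<in> B"
proof (induction k)
  case 0 then show ?case using shift_img_0 blockD by simp
next
  case (Suc k)
  have "shift v (Suc k) ` b = shift v 1 ` shift v k ` b" by (simp add: shift_img_shift)
  then show ?case using Suc cyc by (simp add: is_cyclic_STS_def)
qed

lemma shift_inj: "x < v \<Longrightarrow> y < v \<Longrightarrow> shift v k x = shift v k y \<Longrightarrow> x = y"
  unfolding shift_def using add_unique1 by blast

lemma sum_shift_inv:
  fixes g :: "nat set \<Rightarrow> int"
  assumes inv: "\<And>b k. b \<in> B \<Longrightarrow> g (shift v k ` b) = g b" and x: "x < v"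
  shows "(\<Sum>b\<in>{b\<in>B. x\<in>b}. g b) = (\<Sum>b\<in>{b\<in>B. 0\<in>b}. g b)"
proof (rule sum.reindex_bij_witness[where i="\<lambda>b. shift v x ` b" and j="\<lambda>b. shift v (v - x) ` b"])
  fix a assume a: "a \<in> {b\<in>B. x\<in>b}"
  show "shift v x ` shift v (v - x) ` a = a" using a x blockD(1)[of a]
    by (simp add: shift_img_shift shift_img_v)
  have "shift v (v - x) x = 0" using x by (simp add: shift_def)
  then show "shift v (v - x) ` a \<in> {b\<in>B. 0\<in>b}" using a x shift_mem[of a "v - x"]
    by (metis (mono_tags, lifting) image_eqI mem_Collect_eq)
  show "g (shift v (v - x) ` a) = g a" using a inv by simp
next
  fix b assume b: "b \<in> {b\<in>B. 0\<in>b}"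
  show "shift v (v - x) ` shift v x ` b = b" using b x blockD(1)[of b]
    by (simp add: shift_img_shift shift_img_v)
  show "shift v x ` b \<in> {b\<in>B. x\<in>b}" using b x shift_mem[of b]
    by (force simp: shift_def)
qed

lemma sum_points:
  fixes g :: "nat set \<Rightarrow> int"
  shows "(\<Sum>x<v. \<Sum>b\<in>{b\<in>B. x\<in>b}. g b) = (\<Sum>b\<in>B. 3 * g b)"
proof -
  have "(\<Sum>x<v. \<Sum>b\<in>{b\<in>B. x\<in>b}. g b) = (\<Sum>x<v. \<Sum>b\<in>B. if x \<in> b then g b else 0)"
    using finB by (simp add: sum.inter_filter)
  also have "\<dots> = (\<Sum>b\<in>B. \<Sum>x<v. if x \<in> b then g b else 0)" by (rule sum.swap)
  also have "\<dots> = (\<Sum>b\<in>B. 3 * g b)"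
  proof (rule sum.cong[OF refl])
    fix b assume b: "b \<in> B"
    have "(\<Sum>x<v. if x \<in> b then g b else 0) = (\<Sum>x\<in>{x\<in>{..<v}. x \<in> b}. g b)"
      by (rule sum.inter_filter[symmetric], simp)
    also have "{x\<in>{..<v}. x \<in> b} = b" using blockD(1)[OF b] by auto
    finally show "(\<Sum>x<v. if x \<in> b then g b else 0) = 3 * g b" using blockD(2)[OF b] by simp
  qed
  finally show ?thesis .
qed

lemma pointsum_eq:
  fixes g :: "nat set \<Rightarrow> int"
  assumes inv: "\<And>b k. b \<in> B \<Longrightarrow> g (shift v k ` b) = g b" and x: "x < v"
  shows "int v * (\<Sum>b\<in>{b\<in>B. x\<in>b}. g b) = 3 * (\<Sum>b\<in>B. g b)"
proof -
  have "(\<Sum>y<v. \<Sum>b\<in>{b\<in>B. y\<in>b}. g b) = (\<Sum>y<v. \<Sum>b\<in>{b\<in>B. x\<in>b}. g b)"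
  proof (rule sum.cong[OF refl])
    fix y assume y: "y \<in> {..<v}"
    have 1: "(\<Sum>b\<in>{b\<in>B. y\<in>b}. g b) = (\<Sum>b\<in>{b\<in>B. 0\<in>b}. g b)"
      using y by (intro sum_shift_inv inv) auto
    have 2: "(\<Sum>b\<in>{b\<in>B. x\<in>b}. g b) = (\<Sum>b\<in>{b\<in>B. 0\<in>b}. g b)"
      using x by (intro sum_shift_inv inv) auto
    show "(\<Sum>b\<in>{b\<in>B. y\<in>b}. g b) = (\<Sum>b\<in>{b\<in>B. x\<in>b}. g b)" by (simp only: 1 2)
  qed
  then have "int v * (\<Sum>b\<in>{b\<in>B. x\<in>b}. g b) = (\<Sum>b\<in>B. 3 * g b)"
    using sum_points[of g] by simp
  then show ?thesis by (simp add: sum_distrib_left)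
qed

lemma finite_offd: "finite A \<Longrightarrow> finite (offd A)"
  unfolding offd_def by simp

lemma sum_pairs:
  fixes \<phi> :: "nat \<times> nat \<Rightarrow> int"
  shows "(\<Sum>b\<in>B. \<Sum>p\<in>offd b. \<phi> p) = (\<Sum>p\<in>offd {..<v}. \<phi> p)"
proof -
  have fin: "finite (offd {..<v})" by (simp add: finite_offd)
  have "(\<Sum>p\<in>offd {..<v}. \<phi> p) = (\<Sum>p\<in>offd {..<v}. \<Sum>b\<in>B. if p \<in> offd b then \<phi> p else 0)"
  proof (rule sum.cong[OF refl])
    fix p assume p: "p \<in> offd {..<v}"
    obtain u w where uw: "p = (u, w)" "u < v" "w < v" "u \<noteq> w" using p by (auto simp: offd_def)
    have "{b \<in> B. p \<in> offd b} = {blk B u w}"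
      using blk[OF uw(2,3,4)] blk_eq[of _ u w] uw by (auto simp: offd_def)
    then have "(\<Sum>b\<in>B. if p \<in> offd b then \<phi> p else 0) = (\<Sum>b\<in>{blk B u w}. \<phi> p)"
      using finB by (simp add: sum.inter_filter[symmetric])
    then show "\<phi> p = (\<Sum>b\<in>B. if p \<in> offd b then \<phi> p else 0)" by simp
  qed
  also have "\<dots> = (\<Sum>b\<in>B. \<Sum>p\<in>offd {..<v}. if p \<in> offd b then \<phi> p else 0)" by (rule sum.swap)
  also have "\<dots> = (\<Sum>b\<in>B. \<Sum>p\<in>offd b. \<phi> p)"
  proof (rule sum.cong[OF refl])
    fix b assume b: "b \<in> B"
    have "(\<Sum>p\<in>offd {..<v}. if p \<in> offd b then \<phi> p else 0) = (\<Sum>p\<in>{p\<in>offd {..<v}. p \<in> offd b}. \<phi> p)"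
      using fin by (simp add: sum.inter_filter)
    also have "{p\<in>offd {..<v}. p \<in> offd b} = offd b" using blockD(1)[OF b] by (auto simp: offd_def)
    finally show "(\<Sum>p\<in>offd {..<v}. if p \<in> offd b then \<phi> p else 0) = (\<Sum>p\<in>offd b. \<phi> p)" .
  qed
  finally show ?thesis by simp
qed

lemma sum_dd:
  fixes \<psi> :: "nat \<Rightarrow> int"
  shows "(\<Sum>p\<in>offd {..<v}. \<psi> (dd v (fst p) (snd p))) = int v * (\<Sum>\<delta>\<in>{1..<v}. \<psi> \<delta>)"
proof -
  have e: "offd {..<v} = Sigma {..<v} (\<lambda>u. {..<v} - {u})" by (auto simp: offd_def)
  have "(\<Sum>p\<in>offd {..<v}. \<psi> (dd v (fst p) (snd p))) = (\<Sum>u<v. \<Sum>w\<in>{..<v} - {u}. \<psi> (dd v u w))"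
    unfolding e by (subst sum.Sigma) (auto simp: split_def)
  also have "\<dots> = (\<Sum>u<v. \<Sum>\<delta>\<in>{1..<v}. \<psi> \<delta>)"
  proof (rule sum.cong[OF refl])
    fix u assume u: "u \<in> {..<v}"
    show "(\<Sum>w\<in>{..<v} - {u}. \<psi> (dd v u w)) = (\<Sum>\<delta>\<in>{1..<v}. \<psi> \<delta>)"
    proof (rule sum.reindex_bij_witness[where i="\<lambda>\<delta>. (u + \<delta>) mod v" and j="\<lambda>w. dd v u w"])
      fix a assume a: "a \<in> {..<v} - {u}"
      show "(u + dd v u a) mod v = a" using a u dd_add by auto
      show "dd v u a \<in> {1..<v}" using a u dd_lt[OF v_pos] dd_nz[of u v a] by auto
      show "\<psi> (dd v u a) = \<psi> (dd v u a)" by simp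
    next
      fix b assume b: "b \<in> {1..<v}"
      show "dd v u ((u + b) mod v) = b" using b u v_pos by (intro dd_unique) auto
      have "(u + b) mod v \<noteq> u" using b u add_mod_self_iff[of u v b] by auto
      then show "(u + b) mod v \<in> {..<v} - {u}" using v_pos by auto
    qed
  qed
  finally show ?thesis by simp
qed

lemma sum_trunc:
  fixes E :: "nat \<Rightarrow> int"
  shows "(\<Sum>\<delta>\<in>{1..<v}. if \<delta> \<le> N then E \<delta> else 0) = (\<Sum>d\<in>{1..N}. E d)"
proof -
  have "(\<Sum>\<delta>\<in>{1..<v}. if \<delta> \<le> N then E \<delta> else 0) = (\<Sum>\<delta>\<in>{\<delta>\<in>{1..<v}. \<delta> \<le> N}. E \<delta>)"
    by (rule sum.inter_filter[symmetric], simp)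
  also have "{\<delta>\<in>{1..<v}. \<delta> \<le> N} = {1..N}" using v_N by auto
  finally show ?thesis .
qed

end

lemma mod0_range: "a mod (v::nat) = 0 \<Longrightarrow> a < k * v \<Longrightarrow> \<exists>q. a = v * q \<and> q < k"
proof -
  assume a: "a mod v = 0" "a < k * v"
  then have e: "a = v * (a div v)" by (metis mult_div_mod_eq add.right_neutral)
  then have "v * (a div v) < v * k" using a by (simp add: mult.commute)
  then have "a div v < k" by (metis mult_less_cancel1)
  then show ?thesis using e by blast
qed

context csts
begin

lemma dd_shift: "u < v \<Longrightarrow> w < v \<Longrightarrow> dd v (shift v k u) (shift v k w) = dd v u w"
proof -
  assume a: "u < v" "w < v"
  have "(shift v k u + dd v u w) mod v = (u + k + dd v u w) mod v" by (simp add: shift_def mod_add_left_eq)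
  also have "\<dots> = ((u + dd v u w) mod v + k) mod v" by (simp add: mod_add_left_eq mod_add_right_eq add_ac)
  also have "\<dots> = shift v k w" using a by (simp add: dd_add shift_def)
  finally have "(shift v k u + dd v u w) mod v = shift v k w" .
  then show ?thesis using a v_pos shift_lt dd_lt by (intro dd_unique) auto
qed

lemma ud_shift: "u < v \<Longrightarrow> w < v \<Longrightarrow> ud v (shift v k u) (shift v k w) = ud v u w"
  by (simp add: ud_def dd_shift)

lemma ud_sym: "ud v u w = ud v w u" by (simp add: ud_def min.commute)

lemma ud_bounds: "u < v \<Longrightarrow> w < v \<Longrightarrow> u \<noteq> w \<Longrightarrow> 1 \<le> ud v u w \<and> ud v u w \<le> N"
  using dd_sum[of u v w] dd_nz[of u v w] dd_nz[of w v u] v_N by (auto simp: ud_def)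

lemma pe_pair: "u < v \<Longrightarrow> w < v \<Longrightarrow> u \<noteq> w \<Longrightarrow> pe v E u w + pe v E w u = E (ud v u w)"
  using dd_sum[of u v w] v_N by (auto simp: pe_def ud_def N_def[symmetric])

lemma pe_shift: "u < v \<Longrightarrow> w < v \<Longrightarrow> pe v E (shift v k u) (shift v k w) = pe v E u w"
  by (simp add: pe_def dd_shift)

lemma triple: "b \<in> B \<Longrightarrow> \<exists>x y z. b = {x,y,z} \<and> x \<noteq> y \<and> y \<noteq> z \<and> x \<noteq> z \<and> x < v \<and> y < v \<and> z < v"
  using blockD[of b] card_3_iff[of b] by auto

lemma gE_triple:
  assumes "x < v" "y < v" "z < v" "x \<noteq> y" "y \<noteq> z" "x \<noteq> z"
  shows "gE v E {x,y,z} = E (ud v x y) + E (ud v x z) + E (ud v y z)"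
proof -
  have e: "offd {x,y,z} = {(x,y),(y,x),(x,z),(z,x),(y,z),(z,y)}" using assms by (auto simp: offd_def)
  have "gE v E {x,y,z} = (pe v E x y + pe v E y x) + (pe v E x z + pe v E z x) + (pe v E y z + pe v E z y)"
    unfolding gE_def e using assms by (auto simp: algebra_simps)
  then show ?thesis using assms by (simp add: pe_pair)
qed

lemma gE_shift: "b \<subseteq> {..<v} \<Longrightarrow> gE v E (shift v k ` b) = gE v E b"
proof -
  assume a: "b \<subseteq> {..<v}"
  let ?f = "\<lambda>p. (shift v k (fst p), shift v k (snd p))"
  have e: "offd (shift v k ` b) = ?f ` offd b"
  proof
    show "offd (shift v k ` b) \<subseteq> ?f ` offd b"
    proof
      fix p assume "p \<in> offd (shift v k ` b)"
      then obtain x y where "x \<in> b" "y \<in> b" "p = (shift v k x, shift v k y)" "shift v k x \<noteq> shift v k y"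
        by (auto simp: offd_def)
      then show "p \<in> ?f ` offd b" by (force simp: offd_def)
    qed
    show "?f ` offd b \<subseteq> offd (shift v k ` b)"
    proof
      fix p assume "p \<in> ?f ` offd b"
      then obtain x y where xy: "x \<in> b" "y \<in> b" "x \<noteq> y" "p = (shift v k x, shift v k y)"
        by (auto simp: offd_def)
      then have "shift v k x \<noteq> shift v k y" using a shift_inj by blast
      then show "p \<in> offd (shift v k ` b)" using xy by (auto simp: offd_def)
    qed
  qed
  have inj: "inj_on ?f (offd b)"
  proof (rule inj_onI)
    fix p q assume p: "p \<in> offd b" and q: "q \<in> offd b" and e: "?f p = ?f q"
    have l: "fst p < v" "snd p < v" "fst q < v" "snd q < v" using p q a by (auto simp: offd_def)
    have "fst p = fst q" by (rule shift_inj[OF l(1) l(3), of k]) (use e in simp)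
    moreover have "snd p = snd q" by (rule shift_inj[OF l(2) l(4), of k]) (use e in simp)
    ultimately show "p = q" by (simp add: prod_eq_iff)
  qed
  have "gE v E (shift v k ` b) = (\<Sum>p\<in>offd b. pe v E (shift v k (fst p)) (shift v k (snd p)))"
    unfolding gE_def e by (simp add: sum.reindex[OF inj])
  also have "\<dots> = gE v E b" unfolding gE_def
    using a by (intro sum.cong refl pe_shift) (auto simp: offd_def)
  finally show ?thesis .
qed

lemma gE_pointsum:
  assumes x: "x < v"
  shows "(\<Sum>b\<in>{b\<in>B. x\<in>b}. gE v E b) = 3 * (\<Sum>d\<in>{1..N}. E d)"
proof -
  have inv: "\<And>b k. b \<in> B \<Longrightarrow> gE v E (shift v k ` b) = gE v E b" using gE_shift blockD by blast
  have "int v * (\<Sum>b\<in>{b\<in>B. x\<in>b}. gE v E b) = 3 * (\<Sum>b\<in>B. gE v E b)" by (rule pointsum_eq[OF inv x])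
  also have "(\<Sum>b\<in>B. gE v E b) = (\<Sum>p\<in>offd {..<v}. pe v E (fst p) (snd p))"
    unfolding gE_def by (rule sum_pairs)
  also have "\<dots> = (\<Sum>p\<in>offd {..<v}. (\<lambda>\<delta>. if \<delta> \<le> N then E \<delta> else 0) (dd v (fst p) (snd p)))"
    by (simp add: pe_def N_def)
  also have "\<dots> = int v * (\<Sum>\<delta>\<in>{1..<v}. if \<delta> \<le> N then E \<delta> else 0)" by (rule sum_dd)
  also have "\<dots> = int v * (\<Sum>d\<in>{1..N}. E d)" by (simp only: sum_trunc)
  finally have "int v * (\<Sum>b\<in>{b\<in>B. x\<in>b}. gE v E b) = int v * (3 * (\<Sum>d\<in>{1..N}. E d))"
    by (simp add: algebra_simps)
  then show ?thesis using v_pos by simp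
qed

lemma blk_dd: "b \<in> B \<Longrightarrow> u \<in> b \<Longrightarrow> w \<in> b \<Longrightarrow> u \<noteq> w \<Longrightarrow> blk B 0 (dd v u w) = shift v (v - u) ` b"
proof -
  assume a: "b \<in> B" "u \<in> b" "w \<in> b" "u \<noteq> w"
  have uw: "u < v" "w < v" using a blockD by auto
  have 1: "shift v (v - u) u = 0" using uw by (simp add: shift_def)
  have 2: "shift v (v - u) w = dd v u w" using uw by (simp add: shift_def dd_def)
  have "0 \<in> shift v (v - u) ` b" "dd v u w \<in> shift v (v - u) ` b"
    using a(2,3) 1 2 by (metis image_eqI)+
  moreover have "0 \<noteq> dd v u w" using dd_nz uw a by metis
  ultimately show ?thesis using blk_eq shift_mem a(1) by blast
qed

lemma blk_ud: "b \<in> B \<Longrightarrow> u \<in> b \<Longrightarrow> w \<in> b \<Longrightarrow> u \<noteq> w \<Longrightarrow> \<exists>k. blk B 0 (ud v u w) = shift v k ` b"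
  by (cases "dd v u w \<le> dd v w u") (metis blk_dd min_def ud_def)+

lemma shift_fix_short:
  assumes b: "b \<in> B" and d: "0 < \<delta>" "\<delta> < v" and fx: "shift v \<delta> ` b = b"
  shows "short v b"
proof -
  have sub: "b \<subseteq> {..<v}" using blockD b by auto
  have cl: "\<And>y. y \<in> b \<Longrightarrow> shift v \<delta> y \<in> b" using fx by blast
  obtain x where x: "x \<in> b" using blockD(2)[OF b] by fastforce
  have xv: "x < v" using x sub by auto
  define x1 where "x1 = shift v \<delta> x"
  define x2 where "x2 = shift v \<delta> x1"
  define x3 where "x3 = shift v \<delta> x2"
  have in1: "x1 \<in> b" "x2 \<in> b" "x3 \<in> b" using cl x unfolding x1_def x2_def x3_def by auto
  have lt: "x1 < v" "x2 < v" "x3 < v" using in1 sub by auto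
  have e1: "x1 = (x + \<delta>) mod v" by (simp add: x1_def shift_def)
  have e2: "x2 = (x + 2 * \<delta>) mod v"
  proof -
    have "x2 = shift v (\<delta> + \<delta>) x" unfolding x2_def x1_def shift_shift by simp
    also have "\<delta> + \<delta> = 2 * \<delta>" by simp
    finally show ?thesis by (simp add: shift_def)
  qed
  have e3: "x3 = (x + 3 * \<delta>) mod v"
  proof -
    have "x3 = shift v (\<delta> + \<delta> + \<delta>) x" unfolding x3_def x2_def x1_def shift_shift by simp
    also have "\<delta> + \<delta> + \<delta> = 3 * \<delta>" by simp
    finally show ?thesis by (simp add: shift_def)
  qed
  have e21: "x2 = (x1 + \<delta>) mod v" by (simp add: x2_def shift_def)
  have e32: "x3 = (x2 + \<delta>) mod v" by (simp add: x3_def shift_def)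
  have e31: "x3 = (x1 + 2 * \<delta>) mod v"
  proof -
    have "x3 = shift v (\<delta> + \<delta>) x1" unfolding x3_def x2_def shift_shift by simp
    also have "\<delta> + \<delta> = 2 * \<delta>" by simp
    finally show ?thesis by (simp add: shift_def)
  qed
  have nd: "\<delta> mod v \<noteq> 0" using d by simp
  have n2d: "(2 * \<delta>) mod v \<noteq> 0"
  proof
    assume "(2 * \<delta>) mod v = 0"
    then obtain q where q: "2 * \<delta> = v * q" "q < 2" using mod0_range[of "2*\<delta>" v 2] d by auto
    then have "q = 1" using d by (cases q) auto
    then show False using q v_N by presburger
  qed
  have "x1 \<noteq> x" using e1 nd add_mod_self_iff[OF xv] by auto
  moreover have "x2 \<noteq> x1" using e21 nd add_mod_self_iff[OF lt(1)] by auto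
  moreover have "x2 \<noteq> x" using e2 n2d add_mod_self_iff[OF xv] by auto
  ultimately have bx: "b = {x, x1, x2}"
    using in1 x blockD(2)[OF b] blockD(3)[OF b]
    by (metis (no_types, lifting) card_3_iff card_subset_eq empty_subsetI insert_subset)
  have "x3 \<noteq> x1" using e31 n2d add_mod_self_iff[OF lt(1)] by auto
  moreover have "x3 \<noteq> x2" using e32 nd add_mod_self_iff[OF lt(2)] by auto
  ultimately have "x3 = x" using in1(3) bx by auto
  then have "(3 * \<delta>) mod v = 0" using e3 add_mod_self_iff[OF xv] by auto
  then obtain q where q: "3 * \<delta> = v * q" "q < 3" using mod0_range[of "3*\<delta>" v 3] d by auto
  then have "q = 1 \<or> q = 2" using d by (cases q) auto
  then have "\<delta> = m \<or> \<delta> = 2 * m" using q v_m by auto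
  then show ?thesis
  proof
    assume "\<delta> = m" then show ?thesis using fx by (simp add: short_def m_def)
  next
    assume dm: "\<delta> = 2 * m"
    have "2 * m + 2 * m = m + v" using v_m by simp
    then have "(2 * m + 2 * m) mod v = m" by (simp only:) (use v_m m_ge in simp)
    then have "shift v m ` b = shift v ((2 * m + 2 * m) mod v) ` b" by simp
    also have "\<dots> = shift v (2 * m) ` shift v (2 * m) ` b" by (simp add: shift_img_shift shift_img_mod[symmetric])
    also have "\<dots> = b" using fx dm by simp
    finally show ?thesis by (simp add: short_def m_def)
  qed
qed

lemma same_ud_short:
  assumes b: "b \<in> B" and mem: "u \<in> b" "w1 \<in> b" "w2 \<in> b" and ne: "u \<noteq> w1" "u \<noteq> w2" "w1 \<noteq> w2"
    and eq: "ud v u w1 = ud v u w2"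
  shows "short v b"
proof -
  have lt: "u < v" "w1 < v" "w2 < v" using mem blockD b by auto
  have fixit: "short v b" if "p \<in> b" "q \<in> b" "(p + \<delta>) mod v = r" "(q + \<delta>) mod v = s"
    "r \<in> b" "s \<in> b" "r \<noteq> s" "0 < \<delta>" "\<delta> < v" for p q r s \<delta>
  proof -
    have "shift v \<delta> p \<in> shift v \<delta> ` b" "shift v \<delta> q \<in> shift v \<delta> ` b" using that by auto
    then have "r \<in> shift v \<delta> ` b" "s \<in> shift v \<delta> ` b" using that by (auto simp: shift_def)
    then have "shift v \<delta> ` b = b" using uniq[of "shift v \<delta> ` b" b r s] shift_mem b that by auto
    then show ?thesis using shift_fix_short b that by auto
  qed
  have d1: "0 < dd v u w1" "dd v u w1 < v" "0 < dd v w1 u" "dd v w1 u < v"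
    "0 < dd v u w2" "dd v u w2 < v" "0 < dd v w2 u" "dd v w2 u < v"
    using dd_nz dd_lt v_pos lt ne by auto
  consider "dd v u w1 = dd v u w2" | "dd v u w1 = dd v w2 u" | "dd v w1 u = dd v u w2" | "dd v w1 u = dd v w2 u"
    using eq unfolding ud_def by (metis min_def)
  then show ?thesis
  proof cases
    case 1 then have False using dd_add[of u v w1] dd_add[of u v w2] lt ne by metis
    then show ?thesis ..
  next
    case 2 show ?thesis
    proof (rule fixit[of u w2 "dd v u w1" w1 u])
      show "(u + dd v u w1) mod v = w1" using dd_add lt by auto
      show "(w2 + dd v u w1) mod v = u" using 2 dd_add lt by auto
    qed (use mem ne d1 in auto)
  next
    case 3
    show ?thesis
    proof (rule fixit[of w1 u "dd v w1 u" u w2])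
      show "(w1 + dd v w1 u) mod v = u" using dd_add lt by auto
      show "(u + dd v w1 u) mod v = w2" using 3 dd_add lt by auto
    qed (use mem ne d1 in auto)
  next
    case 4 then have False using dd_add[of w1 v u] dd_add[of w2 v u] lt ne add_unique1 by metis
    then show ?thesis ..
  qed
qed

end

lemma rank_sum:
  fixes A :: "nat set"
  assumes "finite A"
  shows "(\<Sum>d\<in>A. (-1::int) ^ card {e\<in>A. e < d}) = (if even (card A) then 0 else 1)"
  using assms
proof (induction "card A" arbitrary: A)
  case 0 then show ?case by simp
next
  case (Suc n)
  then have ne: "A \<noteq> {}" by auto
  define a where "a = Max A"
  have aA: "a \<in> A" using Max_in[OF Suc.prems ne] a_def by simp
  define A' where "A' = A - {a}"
  have cA': "card A' = n" using Suc.hyps(2) aA A'_def Suc.prems by simp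
  have fA': "finite A'" using Suc.prems A'_def by simp
  have r1: "\<And>d. d \<in> A' \<Longrightarrow> {e\<in>A. e < d} = {e\<in>A'. e < d}"
  proof -
    fix d assume "d \<in> A'"
    then have "d < a" using A'_def a_def Max_ge[OF Suc.prems] by force
    then show "{e\<in>A. e < d} = {e\<in>A'. e < d}" using A'_def by auto
  qed
  have r2: "{e\<in>A. e < a} = A'" using A'_def a_def Max_ge[OF Suc.prems] by force
  have "(\<Sum>d\<in>A. (-1::int) ^ card {e\<in>A. e < d}) =
        (-1::int) ^ card {e\<in>A. e < a} + (\<Sum>d\<in>A'. (-1::int) ^ card {e\<in>A. e < d})"
    using Suc.prems aA A'_def by (simp add: sum.remove)
  also have "(\<Sum>d\<in>A'. (-1::int) ^ card {e\<in>A. e < d}) = (\<Sum>d\<in>A'. (-1::int) ^ card {e\<in>A'. e < d})"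
    using r1 by simp
  also have "\<dots> = (if even n then 0 else 1)" using Suc.hyps(1)[OF cA'[symmetric] fA'] cA' by simp
  finally show ?case using r2 cA' Suc.hyps(2)[symmetric] by auto
qed

context csts
begin

lemma m_lt: "m < v" using v_m m_ge by simp

lemma shift_m_ne: "y < v \<Longrightarrow> shift v m y \<noteq> y"
  using add_mod_self_iff[of y v m] m_lt m_ge by (simp add: shift_def)

lemma short_mem: "short v b \<Longrightarrow> y \<in> b \<Longrightarrow> shift v m y \<in> b"
  unfolding short_def m_def by blast

lemma short_shift: "short v b \<Longrightarrow> short v (shift v k ` b)"
  unfolding short_def m_def[symmetric] by (metis add.commute shift_img_shift)

lemma short_shift_iff: "b \<subseteq> {..<v} \<Longrightarrow> short v (shift v k ` b) \<longleftrightarrow> short v b"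
  using short_shift[of "shift v k ` b" "v - k mod v"] short_shift[of b k] shift_img_back[of b k] by auto

lemma short_uniq:
  assumes "b \<in> B" "b' \<in> B" "short v b" "short v b'" "x \<in> b" "x \<in> b'"
  shows "b = b'"
proof -
  have xv: "x < v" using assms blockD by auto
  have "shift v m x \<in> b" "shift v m x \<in> b'" using short_mem assms by auto
  moreover have "x \<noteq> shift v m x" using shift_m_ne[OF xv] by metis
  ultimately show ?thesis using uniq[of b b' x "shift v m x"] assms by blast
qed

lemma minc_shift:
  assumes a: "b \<subseteq> {..<v}"
  shows "(\<forall>u\<in>shift v k ` b. \<forall>w\<in>shift v k ` b. u \<noteq> w \<longrightarrow> d \<le> ud v u w) \<longleftrightarrow>
         (\<forall>u\<in>b. \<forall>w\<in>b. u \<noteq> w \<longrightarrow> d \<le> ud v u w)"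
proof
  assume h: "\<forall>u\<in>shift v k ` b. \<forall>w\<in>shift v k ` b. u \<noteq> w \<longrightarrow> d \<le> ud v u w"
  show "\<forall>u\<in>b. \<forall>w\<in>b. u \<noteq> w \<longrightarrow> d \<le> ud v u w"
  proof (intro ballI impI)
    fix u w assume u: "u \<in> b" and w: "w \<in> b" and ne: "u \<noteq> w"
    have l: "u < v" "w < v" using u w a by auto
    have "shift v k u \<noteq> shift v k w" using shift_inj[OF l] ne by blast
    then have "d \<le> ud v (shift v k u) (shift v k w)" using h u w by auto
    then show "d \<le> ud v u w" using ud_shift[OF l] by simp
  qed
next
  assume h: "\<forall>u\<in>b. \<forall>w\<in>b. u \<noteq> w \<longrightarrow> d \<le> ud v u w"
  show "\<forall>u\<in>shift v k ` b. \<forall>w\<in>shift v k ` b. u \<noteq> w \<longrightarrow> d \<le> ud v u w"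
  proof (intro ballI impI)
    fix u' w' assume u': "u' \<in> shift v k ` b" and w': "w' \<in> shift v k ` b" and ne: "u' \<noteq> w'"
    obtain u w where uw: "u \<in> b" "w \<in> b" "u' = shift v k u" "w' = shift v k w" using u' w' by auto
    have l: "u < v" "w < v" using uw a by auto
    have "u \<noteq> w" using ne uw by auto
    then show "d \<le> ud v u' w'" using h uw ud_shift[OF l] by auto
  qed
qed

lemma R_iff:
  assumes Pinv: "\<And>b k. b \<in> B \<Longrightarrow> P (shift v k ` b) = P b"
    and b: "b \<in> B" and uw: "u \<in> b" "w \<in> b" "u \<noteq> w"
  shows "ud v u w \<in> Rset v B P \<longleftrightarrow> P b \<and> (\<forall>u'\<in>b. \<forall>w'\<in>b. u' \<noteq> w' \<longrightarrow> ud v u w \<le> ud v u' w')"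
proof -
  obtain k where k: "blk B 0 (ud v u w) = shift v k ` b" using blk_ud[OF b uw] by blast
  have sub: "b \<subseteq> {..<v}" using blockD b by auto
  have bd: "1 \<le> ud v u w \<and> ud v u w \<le> N" using ud_bounds uw sub by auto
  show ?thesis unfolding Rset_def N_def[symmetric] using bd k Pinv[OF b] minc_shift[OF sub] by auto
qed

lemma gE_R:
  assumes Pinv: "\<And>b k. b \<in> B \<Longrightarrow> P (shift v k ` b) = P b"
    and b: "b \<in> B" "\<not> short v b" "P b"
  shows "\<exists>d\<in>Rset v B P. gE v (\<lambda>d. if d \<in> Rset v B P then G d else 0) b = G d"
proof -
  obtain x y z where xyz: "b = {x,y,z}" "x \<noteq> y" "y \<noteq> z" "x \<noteq> z" "x < v" "y < v" "z < v"
    using triple[OF b(1)] by blast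
  let ?R = "Rset v B P"
  define a1 where "a1 = ud v x y"
  define a2 where "a2 = ud v x z"
  define a3 where "a3 = ud v y z"
  have allc: "\<And>d. (\<forall>u'\<in>b. \<forall>w'\<in>b. u' \<noteq> w' \<longrightarrow> d \<le> ud v u' w') \<longleftrightarrow> d \<le> a1 \<and> d \<le> a2 \<and> d \<le> a3"
    unfolding a1_def a2_def a3_def using xyz ud_sym by auto
  have i1: "a1 \<in> ?R \<longleftrightarrow> a1 \<le> a2 \<and> a1 \<le> a3"
    using R_iff[OF Pinv b(1), of x y] xyz b(3) allc unfolding a1_def by auto
  have i2: "a2 \<in> ?R \<longleftrightarrow> a2 \<le> a1 \<and> a2 \<le> a3"
    using R_iff[OF Pinv b(1), of x z] xyz b(3) allc unfolding a2_def by auto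
  have i3: "a3 \<in> ?R \<longleftrightarrow> a3 \<le> a1 \<and> a3 \<le> a2"
    using R_iff[OF Pinv b(1), of y z] xyz b(3) allc unfolding a3_def by auto
  have d12: "a1 \<noteq> a2" using same_ud_short[OF b(1), of x y z] xyz b(2) unfolding a1_def a2_def by auto
  have d13: "a1 \<noteq> a3" using same_ud_short[OF b(1), of y x z] xyz b(2) ud_sym unfolding a1_def a3_def by auto
  have d23: "a2 \<noteq> a3" using same_ud_short[OF b(1), of z x y] xyz b(2) ud_sym unfolding a2_def a3_def by auto
  have g: "gE v (\<lambda>d. if d \<in> ?R then G d else 0) b =
     (if a1 \<in> ?R then G a1 else 0) + (if a2 \<in> ?R then G a2 else 0) + (if a3 \<in> ?R then G a3 else 0)"
    unfolding xyz(1) a1_def a2_def a3_def using xyz by (simp add: gE_triple)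
  show ?thesis
  proof (cases "a1 \<le> a2 \<and> a1 \<le> a3")
    case True then show ?thesis using g i1 i2 i3 d12 d13 d23 by auto
  next
    case False
    show ?thesis
    proof (cases "a2 \<le> a1 \<and> a2 \<le> a3")
      case True then show ?thesis using g i1 i2 i3 d12 d13 d23 by auto
    next
      case False2: False
      then have "a3 \<le> a1 \<and> a3 \<le> a2" using False by auto
      then show ?thesis using g i1 i2 i3 d12 d13 d23 by auto
    qed
  qed
qed

lemma gE_notP:
  assumes Pinv: "\<And>b k. b \<in> B \<Longrightarrow> P (shift v k ` b) = P b"
    and b: "b \<in> B" "\<not> P b"
  shows "gE v (\<lambda>d. if d \<in> Rset v B P then G d else 0) b = 0"
proof -
  obtain x y z where xyz: "b = {x,y,z}" "x \<noteq> y" "y \<noteq> z" "x \<noteq> z" "x < v" "y < v" "z < v"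
    using triple[OF b(1)] by blast
  have "ud v x y \<notin> Rset v B P" "ud v x z \<notin> Rset v B P" "ud v y z \<notin> Rset v B P"
    using R_iff[OF Pinv b(1)] xyz b(2) by auto
  then show ?thesis unfolding xyz(1) using xyz by (simp add: gE_triple)
qed

lemma R_sub: "Rset v B P \<subseteq> {1..N}" unfolding Rset_def N_def by auto

lemma sumE: "(\<Sum>d\<in>{1..N}. if d \<in> Rset v B P then G d else 0) = (\<Sum>d\<in>Rset v B P. (G d :: int))"
proof -
  have "(\<Sum>d\<in>{1..N}. if d \<in> Rset v B P then G d else 0) = (\<Sum>d\<in>{d\<in>{1..N}. d \<in> Rset v B P}. G d)"
    by (rule sum.inter_filter[symmetric]) simp
  also have "{d\<in>{1..N}. d \<in> Rset v B P} = Rset v B P" using R_sub[of P] by auto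
  finally show ?thesis .
qed

lemma short_ex: "\<exists>b\<in>B. short v b"
proof (rule ccontr)
  assume ns: "\<not> (\<exists>b\<in>B. short v b)"
  define P where "P = (\<lambda>b::nat set. True)"
  have Pinv: "\<And>b k. b \<in> B \<Longrightarrow> P (shift v k ` b) = P b" by (simp add: P_def)
  define R where "R = Rset v B P"
  have g1: "\<And>b. b \<in> B \<Longrightarrow> gE v (\<lambda>d. if d \<in> R then (\<lambda>_. 1::int) d else 0) b = 1"
    using gE_R[OF Pinv, of _ "\<lambda>_. 1"] ns unfolding R_def P_def by fastforce
  have "(\<Sum>b\<in>{b\<in>B. 0\<in>b}. gE v (\<lambda>d. if d \<in> R then (\<lambda>_. 1::int) d else 0) b) =
        3 * (\<Sum>d\<in>{1..N}. if d \<in> R then (\<lambda>_. 1::int) d else 0)"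
    by (rule gE_pointsum) (use v_pos in simp)
  also have "\<dots> = 3 * int (card R)" unfolding R_def by (simp only: sumE) simp
  finally have c1: "int (card {b\<in>B. 0\<in>b}) = 3 * int (card R)" using g1 by simp
  have g3: "\<And>b. b \<in> B \<Longrightarrow> gE v (\<lambda>_. 1::int) b = 3"
  proof -
    fix b assume b: "b \<in> B"
    obtain x y z where xyz: "b = {x,y,z}" "x \<noteq> y" "y \<noteq> z" "x \<noteq> z" "x < v" "y < v" "z < v"
      using triple[OF b] by blast
    show "gE v (\<lambda>_. 1::int) b = 3" unfolding xyz(1) using xyz by (simp add: gE_triple)
  qed
  have "(\<Sum>b\<in>{b\<in>B. 0\<in>b}. gE v (\<lambda>_. 1::int) b) = 3 * (\<Sum>d\<in>{1..N}. (\<lambda>_. 1::int) d)"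
    by (rule gE_pointsum) (use v_pos in simp)
  then have "3 * int (card {b\<in>B. 0\<in>b}) = 3 * int N" using g3 by simp
  then have "N = 3 * card R" using c1 by linarith
  then show False using N_mod by simp
qed

lemma short_single: "x < v \<Longrightarrow> \<exists>b0. {b\<in>B. x\<in>b \<and> short v b} = {b0}"
proof -
  assume x: "x < v"
  obtain b1 where b1: "b1 \<in> B" "short v b1" using short_ex by blast
  obtain y where y: "y \<in> b1" using blockD(2)[OF b1(1)] by fastforce
  have yv: "y < v" using y blockD b1 by auto
  define b0 where "b0 = shift v (dd v y x) ` b1"
  have "x = shift v (dd v y x) y" using dd_add[OF yv x] by (simp add: shift_def)
  then have "x \<in> b0" unfolding b0_def using y by blast
  then have b0: "b0 \<in> B" "short v b0" "x \<in> b0"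
    using shift_mem[OF b1(1)] short_shift[OF b1(2)] unfolding b0_def by auto
  have "{b\<in>B. x\<in>b \<and> short v b} = {b0}" using b0 short_uniq by blast
  then show ?thesis by blast
qed

lemma sum_short:
  fixes c :: int
  assumes x: "x < v"
  shows "(\<Sum>b\<in>{b\<in>B. x\<in>b}. if short v b then c else 0) = c"
proof -
  obtain b0 where b0: "{b\<in>B. x\<in>b \<and> short v b} = {b0}" using short_single[OF x] by blast
  have "(\<Sum>b\<in>{b\<in>B. x\<in>b}. if short v b then c else 0) = (\<Sum>b\<in>{b\<in>{b\<in>B. x\<in>b}. short v b}. c)"
    by (rule sum.inter_filter[symmetric]) (simp add: finB)
  also have "{b\<in>{b\<in>B. x\<in>b}. short v b} = {b0}" using b0 by auto
  finally show ?thesis by simp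
qed

lemma flow4: "admits_zero_sum_flow 4 v B"
proof -
  define P where "P = (\<lambda>b. \<not> short v b)"
  have Pinv: "\<And>b k. b \<in> B \<Longrightarrow> P (shift v k ` b) = P b"
    unfolding P_def using short_shift_iff blockD by blast
  define R where "R = Rset v B P"
  define R1 where "R1 = R - {1}"
  define S1 where "S1 = (\<Sum>d\<in>R1. (-1::int) ^ card {e\<in>R1. e < d})"
  define c where "c = -1 - S1"
  define G where "G = (\<lambda>d. if d = 1 then c else (-1::int) ^ card {e\<in>R1. e < d})"
  define E where "E = (\<lambda>d. if d \<in> R then G d else 0)"
  define f where "f = (\<lambda>b. if short v b then 3 else gE v E b)"
  have finR: "finite R" unfolding R_def using R_sub finite_subset by blast
  have S1: "S1 = 0 \<or> S1 = 1" unfolding S1_def using rank_sum[of R1] finR R1_def by auto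
  have R1in: "1 \<in> R"
  proof -
    have l: "0 < v" "1 < v" using v3 by auto
    let ?b = "blk B 0 1"
    have bb: "?b \<in> B" "0 \<in> ?b" "1 \<in> ?b" using blk[of 0 1] l by auto
    have ns: "\<not> short v ?b"
    proof
      assume s: "short v ?b"
      have "shift v m 0 \<in> ?b" "shift v m 1 \<in> ?b" using short_mem[OF s] bb by auto
      moreover have "shift v m 0 = m" "shift v m 1 = m + 1" using m_lt v_m m_ge by (auto simp: shift_def)
      ultimately have "{0, 1, m, m + 1} \<subseteq> ?b" using bb by auto
      then have "card {0, 1, m, m + 1} \<le> card ?b" using blockD(3)[OF bb(1)] card_mono by blast
      then show False using blockD(2)[OF bb(1)] m_ge by simp
    qed
    have "\<forall>u\<in>?b. \<forall>w\<in>?b. u \<noteq> w \<longrightarrow> 1 \<le> ud v u w" using ud_bounds blockD(1)[OF bb(1)] by blast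
    then show ?thesis unfolding R_def Rset_def P_def using ns N_ge N_def by auto
  qed
  have sumG: "(\<Sum>d\<in>R. G d) = c + S1"
  proof -
    have "(\<Sum>d\<in>R. G d) = G 1 + (\<Sum>d\<in>R1. G d)" unfolding R1_def using finR R1in by (simp add: sum.remove)
    also have "(\<Sum>d\<in>R1. G d) = S1" unfolding S1_def G_def R1_def by (intro sum.cong) auto
    finally show ?thesis by (simp add: G_def)
  qed
  have A1: "\<forall>b\<in>B. f b \<noteq> 0 \<and> \<bar>f b\<bar> \<le> int 4 - 1"
  proof
    fix b assume b: "b \<in> B"
    show "f b \<noteq> 0 \<and> \<bar>f b\<bar> \<le> int 4 - 1"
    proof (cases "short v b")
      case True then show ?thesis by (simp add: f_def)
    next
      case False
      then obtain d where d: "d \<in> R" "gE v E b = G d"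
        using gE_R[OF Pinv b, of G] unfolding P_def R_def E_def by auto
      have "G d = c \<or> G d = 1 \<or> G d = -1" unfolding G_def by (auto simp: minus_one_power_iff)
      then show ?thesis using S1 False d by (auto simp: f_def c_def)
    qed
  qed
  have A2: "\<forall>x\<in>{..<v}. (\<Sum>b\<in>{b\<in>B. x\<in>b}. f b) = 0"
  proof
    fix x assume x: "x \<in> {..<v}"
    have fe: "\<And>b. b \<in> {b\<in>B. x\<in>b} \<Longrightarrow> f b = (if short v b then 3 else 0) + gE v E b"
      using gE_notP[OF Pinv, of _ G] unfolding f_def P_def E_def R_def by auto
    have "(\<Sum>b\<in>{b\<in>B. x\<in>b}. f b) = (\<Sum>b\<in>{b\<in>B. x\<in>b}. if short v b then 3 else 0) + (\<Sum>b\<in>{b\<in>B. x\<in>b}. gE v E b)"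
      using fe by (simp add: sum.distrib)
    also have "\<dots> = 3 + 3 * (\<Sum>d\<in>{1..N}. E d)" using x sum_short gE_pointsum by simp
    also have "(\<Sum>d\<in>{1..N}. E d) = c + S1" unfolding E_def R_def using sumE sumG R_def by simp
    finally show "(\<Sum>b\<in>{b\<in>B. x\<in>b}. f b) = 0" by (simp add: c_def)
  qed
  have "zero_sum_flow 4 v B f" unfolding zero_sum_flow_def using A1 A2 by blast
  then show ?thesis unfolding admits_zero_sum_flow_def by blast
qed

end

lemma offd_triple_sum:
  fixes \<phi> :: "nat \<times> nat \<Rightarrow> int"
  assumes "x \<noteq> y" "y \<noteq> z" "x \<noteq> z"
  shows "(\<Sum>p\<in>offd {x,y,z}. \<phi> p) = \<phi> (x,y) + \<phi> (y,x) + \<phi> (x,z) + \<phi> (z,x) + \<phi> (y,z) + \<phi> (z,y)"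
proof -
  have e: "offd {x,y,z} = {(x,y),(y,x),(x,z),(z,x),(y,z),(z,y)}" using assms by (auto simp: offd_def)
  have n: "(x,y) \<notin> {(y,x),(x,z),(z,x),(y,z),(z,y)}" "(y,x) \<notin> {(x,z),(z,x),(y,z),(z,y)}"
    "(x,z) \<notin> {(z,x),(y,z),(z,y)}" "(z,x) \<notin> {(y,z),(z,y)}" "(y,z) \<notin> {(z,y)}"
    using assms by auto
  show ?thesis unfolding e using n by (simp add: add.assoc)
qed

lemma mod3_helper: "((u::nat) + d) mod 3 = w mod 3 \<Longrightarrow> (u mod 3 = w mod 3 \<longleftrightarrow> d mod 3 = 0)"
proof -
  assume h: "(u + d) mod 3 = w mod 3"
  have "u mod 3 = w mod 3 \<longleftrightarrow> (u + d) mod 3 = (u + 0) mod 3" using h by auto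
  also have "\<dots> \<longleftrightarrow> d mod 3 = 0"
  proof
    assume "(u + d) mod 3 = (u + 0) mod 3"
    from mod_cancel[OF this] show "d mod 3 = 0" by simp
  next
    assume "d mod 3 = 0"
    then show "(u + d) mod 3 = (u + 0) mod 3" by (metis mod_add_right_eq)
  qed
  finally show ?thesis .
qed

lemma card3_cases:
  fixes a b c :: nat
  shows "2 - 2 * ((if a = b then 1 else 0) + (if a = c then 1 else 0) + (if b = c then 1 else 0)) =
     2 * (if card {a,b,c} = 3 then 1 else 0) - 4 * (if card {a,b,c} = 1 then 1 else (0::int))"
  by (cases "a = b"; cases "a = c"; cases "b = c"; simp add: card_insert_if)

lemma card3_distinct: "card {a,b,c} = 3 \<Longrightarrow> a \<noteq> b \<and> a \<noteq> c \<and> b \<noteq> c"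
  by (cases "a = b"; cases "a = c"; cases "b = c"; simp add: card_insert_if)

lemma perm3_sum:
  fixes h :: "nat \<Rightarrow> int"
  assumes "r0 < 3" "r1 < 3" "r2 < 3" "r0 \<noteq> r1" "r0 \<noteq> r2" "r1 \<noteq> r2"
  shows "h r0 + h r1 + h r2 = h 0 + h 1 + h 2"
proof -
  have "r0 = 0 \<or> r0 = 1 \<or> r0 = 2" "r1 = 0 \<or> r1 = 1 \<or> r1 = 2" "r2 = 0 \<or> r2 = 1 \<or> r2 = 2" using assms by auto
  then show ?thesis using assms by auto
qed

context csts
begin

definition rc :: "nat set \<Rightarrow> nat" where "rc b = card ((\<lambda>x. x mod 3) ` b)"

lemma card_mult3: "card {\<delta>\<in>{1..<v}. \<delta> mod 3 = 0} = m - 1"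
proof -
  have "{\<delta>\<in>{1..<v}. \<delta> mod 3 = 0} = (\<lambda>j. 3 * j) ` {1..<m}"
  proof
    show "{\<delta>\<in>{1..<v}. \<delta> mod 3 = 0} \<subseteq> (\<lambda>j. 3 * j) ` {1..<m}"
    proof
      fix \<delta> assume d: "\<delta> \<in> {\<delta>\<in>{1..<v}. \<delta> mod 3 = 0}"
      then have "\<delta> = 3 * (\<delta> div 3)" "\<delta> div 3 \<in> {1..<m}" using v_m by auto
      then show "\<delta> \<in> (\<lambda>j. 3 * j) ` {1..<m}" by (metis image_eqI)
    qed
    show "(\<lambda>j. 3 * j) ` {1..<m} \<subseteq> {\<delta>\<in>{1..<v}. \<delta> mod 3 = 0}" using v_m by auto
  qed
  moreover have "inj_on (\<lambda>j. 3 * j) {1..<m}" by (simp add: inj_on_def)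
  ultimately show ?thesis by (simp add: card_image)
qed

lemma count_types:
  "int (card {b\<in>B. rc b = 3}) = int m + 2 * int (card {b\<in>B. rc b = 1})"
proof -
  define sp where "sp = (\<lambda>b. \<Sum>p\<in>offd b. (if fst p mod 3 = snd p mod 3 then 1 else (0::int)))"
  have per: "\<And>b. b \<in> B \<Longrightarrow> 2 - sp b = 2 * (if rc b = 3 then 1 else 0) - 4 * (if rc b = 1 then 1 else (0::int))"
  proof -
    fix b assume b: "b \<in> B"
    obtain x y z where xyz: "b = {x,y,z}" "x \<noteq> y" "y \<noteq> z" "x \<noteq> z" "x < v" "y < v" "z < v"
      using triple[OF b] by blast
    have "sp b = 2 * ((if x mod 3 = y mod 3 then 1 else 0) + (if x mod 3 = z mod 3 then 1 else 0) +
        (if y mod 3 = z mod 3 then 1 else 0))"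
      unfolding sp_def xyz(1) using xyz by (simp add: offd_triple_sum eq_commute[of "z mod 3"] eq_commute[of "y mod 3" "x mod 3"])
    moreover have "rc b = card {x mod 3, y mod 3, z mod 3}" unfolding rc_def xyz(1) by simp
    ultimately show "2 - sp b = 2 * (if rc b = 3 then 1 else 0) - 4 * (if rc b = 1 then 1 else (0::int))"
      using card3_cases by simp
  qed
  have six: "\<And>b. b \<in> B \<Longrightarrow> (\<Sum>p\<in>offd b. (1::int)) = 6"
  proof -
    fix b assume b: "b \<in> B"
    obtain x y z where xyz: "b = {x,y,z}" "x \<noteq> y" "y \<noteq> z" "x \<noteq> z" "x < v" "y < v" "z < v"
      using triple[OF b] by blast
    show "(\<Sum>p\<in>offd b. (1::int)) = 6" unfolding xyz(1) using xyz offd_triple_sum[of x y z "\<lambda>_. 1"] by simp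
  qed
  have "(\<Sum>b\<in>B. \<Sum>p\<in>offd b. (1::int)) = (\<Sum>p\<in>offd {..<v}. (\<lambda>_. 1::int) (dd v (fst p) (snd p)))"
    by (simp only: sum_pairs)
  also have "\<dots> = int v * (\<Sum>\<delta>\<in>{1..<v}. (1::int))" by (rule sum_dd)
  finally have cB: "6 * int (card B) = int v * (int v - 1)" using six v_pos by simp
  have resid: "\<And>u w. u < v \<Longrightarrow> w < v \<Longrightarrow> (u mod 3 = w mod 3) \<longleftrightarrow> dd v u w mod 3 = 0"
  proof -
    fix u w assume uw: "u < v" "w < v"
    have "(u + dd v u w) mod v = w" using dd_add uw by simp
    then have "(u + dd v u w) mod 3 = w mod 3" using v_m by (metis dvd_triv_left mod_mod_cancel)
    then show "(u mod 3 = w mod 3) \<longleftrightarrow> dd v u w mod 3 = 0" by (rule mod3_helper)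
  qed
  have "(\<Sum>b\<in>B. sp b) = (\<Sum>p\<in>offd {..<v}. (if fst p mod 3 = snd p mod 3 then 1 else (0::int)))"
    unfolding sp_def by (rule sum_pairs)
  also have "\<dots> = (\<Sum>p\<in>offd {..<v}. (\<lambda>\<delta>. if \<delta> mod 3 = 0 then 1 else (0::int)) (dd v (fst p) (snd p)))"
    by (rule sum.cong[OF refl]) (auto simp: offd_def resid)
  also have "\<dots> = int v * (\<Sum>\<delta>\<in>{1..<v}. if \<delta> mod 3 = 0 then 1 else (0::int))" by (rule sum_dd)
  also have "(\<Sum>\<delta>\<in>{1..<v}. if \<delta> mod 3 = 0 then 1 else (0::int)) = int (card {\<delta>\<in>{1..<v}. \<delta> mod 3 = 0})"
    by (simp add: sum.inter_filter[symmetric])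
  finally have csp: "(\<Sum>b\<in>B. sp b) = int v * (int m - 1)" using card_mult3 m_ge by simp
  have "(\<Sum>b\<in>B. 2 - sp b) = (\<Sum>b\<in>B. 2 * (if rc b = 3 then 1 else 0) - 4 * (if rc b = 1 then 1 else (0::int)))"
    using per by simp
  also have "\<dots> = 2 * int (card {b\<in>B. rc b = 3}) - 4 * int (card {b\<in>B. rc b = 1})"
    by (simp add: sum_subtractf sum_distrib_left[symmetric] sum.inter_filter[symmetric] finB)
  finally have k: "2 * int (card B) - int v * (int m - 1) =
      2 * int (card {b\<in>B. rc b = 3}) - 4 * int (card {b\<in>B. rc b = 1})"
    using csp by (simp add: sum_subtractf)
  have vm: "int v = 3 * int m" using v_m by simp
  have "2 * int (card B) = int m * (3 * int m - 1)" using cB vm by (simp add: algebra_simps)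
  moreover have "int m * (3 * int m - 1) - 3 * int m * (int m - 1) = 2 * int m" by (simp add: algebra_simps)
  moreover have "int v * (int m - 1) = 3 * int m * (int m - 1)" using vm by simp
  ultimately show ?thesis using k by linarith
qed

lemma count_short: "3 * card {b\<in>B. short v b} = v"
proof -
  have "(\<Sum>x<v. \<Sum>b\<in>{b\<in>B. x\<in>b}. (\<lambda>b. if short v b then 1 else (0::int)) b) = (\<Sum>b\<in>B. 3 * (if short v b then 1 else 0))"
    by (rule sum_points)
  moreover have "(\<Sum>x<v. \<Sum>b\<in>{b\<in>B. x\<in>b}. (\<lambda>b. if short v b then 1 else (0::int)) b) = int v"
    using sum_short by simp
  moreover have "(\<Sum>b\<in>B. 3 * (if short v b then 1 else (0::int))) = 3 * int (card {b\<in>B. short v b})"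
    by (simp add: sum_distrib_left[symmetric] sum.inter_filter[symmetric] finB)
  ultimately show ?thesis by linarith
qed

lemma type3_from_type1:
  assumes "b1 \<in> B" "rc b1 = 1"
  shows "\<exists>b\<in>B. rc b = 3 \<and> \<not> short v b"
proof (rule ccontr)
  assume "\<not> ?thesis"
  then have sub: "{b\<in>B. rc b = 3} \<subseteq> {b\<in>B. short v b}" by auto
  have "card {b\<in>B. rc b = 3} \<le> card {b\<in>B. short v b}" using card_mono[OF _ sub] finB by simp
  moreover have "card {b\<in>B. rc b = 1} > 0"
    by (rule card_gt_0_iff[THEN iffD2]) (use assms finB in auto)
  ultimately show False using count_types count_short v_m by linarith
qed

end

lemma mod3_helper2: "((p::nat) + d) mod 3 = X \<Longrightarrow> (q + e) mod 3 = X \<Longrightarrow> d mod 3 = e mod 3 \<Longrightarrow> p mod 3 = q mod 3"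
proof -
  assume 1: "(p + d) mod 3 = X" and 2: "(q + e) mod 3 = X" and 3: "d mod 3 = e mod 3"
  have "(q + e) mod 3 = (q + d) mod 3" by (metis 3 mod_add_right_eq)
  then have "(d + p) mod 3 = (d + q) mod 3" using 1 2 by (simp add: add.commute)
  then show ?thesis by (rule mod_cancel)
qed

context csts
begin

lemma flow3:
  assumes b3: "b3 \<in> B" "rc b3 = 3" "\<not> short v b3"
  shows "admits_zero_sum_flow 3 v B"
proof -
  have sub3: "b3 \<subseteq> {..<v}" using blockD b3 by auto
  define Ob where "Ob = (\<lambda>k. shift v k ` b3) ` {..<v}"
  have noteq: "\<And>k k'. k < v \<Longrightarrow> k' < v \<Longrightarrow> k < k' \<Longrightarrow> shift v k ` b3 \<noteq> shift v k' ` b3"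
  proof
    fix k k' assume kk: "k < v" "k' < v" "k < k'" and e: "shift v k ` b3 = shift v k' ` b3"
    have "shift v (v - k) ` shift v k ` b3 = shift v (v - k) ` shift v k' ` b3" using e by simp
    then have 1: "shift v (k + (v - k)) ` b3 = shift v (k' + (v - k)) ` b3" by (simp only: shift_img_shift)
    have 2: "shift v (k + (v - k)) ` b3 = b3" using kk sub3 shift_img_v by simp
    have eqn: "k' + (v - k) = (k' - k) + v" using kk by simp
    have "(k' + (v - k)) mod v = ((k' - k) + v) mod v" by (simp only: eqn)
    also have "\<dots> = (k' - k) mod v" by (rule mod_add_self2)
    also have "\<dots> = k' - k" using kk by simp
    finally have "(k' + (v - k)) mod v = k' - k" .
    then have 3: "shift v (k' + (v - k)) ` b3 = shift v (k' - k) ` b3" using shift_img_mod by metis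
    have "shift v (k' - k) ` b3 = b3" using 1 2 3 by simp
    moreover have "0 < k' - k" "k' - k < v" using kk by linarith+
    ultimately have "short v b3" using shift_fix_short[OF b3(1), of "k' - k"] by blast
    then show False using b3(3) by blast
  qed
  have inj: "inj_on (\<lambda>k. shift v k ` b3) {..<v}"
    by (rule inj_onI) (metis lessThan_iff linorder_neqE_nat noteq)
  define kof where "kof = (\<lambda>b. THE k. k < v \<and> shift v k ` b3 = b)"
  have kof: "\<And>k. k < v \<Longrightarrow> kof (shift v k ` b3) = k"
  proof -
    fix k assume k: "k < v"
    show "kof (shift v k ` b3) = k" unfolding kof_def
      by (rule the_equality) (use k inj_onD[OF inj] in auto)
  qed
  have Oclosed: "\<And>b j. b \<in> Ob \<Longrightarrow> shift v j ` b \<in> Ob"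
  proof -
    fix b j assume "b \<in> Ob"
    then obtain k where "b = shift v k ` b3" unfolding Ob_def by auto
    then have "shift v j ` b = shift v ((k + j) mod v) ` b3" by (simp add: shift_img_shift shift_img_mod[symmetric])
    then show "shift v j ` b \<in> Ob" unfolding Ob_def using v_pos by auto
  qed
  have Oiff: "\<And>b j. b \<in> B \<Longrightarrow> shift v j ` b \<in> Ob \<longleftrightarrow> b \<in> Ob"
    using Oclosed shift_img_back blockD by metis
  have OB: "Ob \<subseteq> B" unfolding Ob_def using shift_mem b3 by auto
  have Ons: "\<And>b. b \<in> Ob \<Longrightarrow> \<not> short v b" unfolding Ob_def using short_shift_iff sub3 b3 by auto
  define P where "P = (\<lambda>b. b \<notin> Ob \<and> \<not> short v b)"
  have Pinv: "\<And>b k. b \<in> B \<Longrightarrow> P (shift v k ` b) = P b"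
    unfolding P_def using Oiff short_shift_iff blockD by blast
  define R where "R = Rset v B P"
  define S where "S = (\<Sum>d\<in>R. (-1::int) ^ card {e\<in>R. e < d})"
  define G where "G = (\<lambda>d. (-1::int) ^ card {e\<in>R. e < d})"
  define E where "E = (\<lambda>d. if d \<in> R then G d else 0)"
  have finR: "finite R" unfolding R_def using R_sub finite_subset by blast
  have S: "S = 0 \<or> S = 1" unfolding S_def using rank_sum[OF finR] by auto
  define a where "a = (if S = 0 then 1 else -2::int)"
  define h where "h = (\<lambda>r::nat. if r = 0 then a else -1::int)"
  define f where "f = (\<lambda>b. if b \<in> Ob then h (kof b mod 3) else if short v b then 1 else gE v E b)"
  have A1: "\<forall>b\<in>B. f b \<noteq> 0 \<and> \<bar>f b\<bar> \<le> int 3 - 1"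
  proof
    fix b assume b: "b \<in> B"
    show "f b \<noteq> 0 \<and> \<bar>f b\<bar> \<le> int 3 - 1"
    proof (cases "b \<in> Ob")
      case True then show ?thesis by (auto simp: f_def h_def a_def)
    next
      case nO: False
      show ?thesis
      proof (cases "short v b")
        case True then show ?thesis using nO by (simp add: f_def)
      next
        case False
        then obtain d where d: "d \<in> R" "gE v E b = G d"
          using gE_R[OF Pinv b, of G] nO unfolding P_def R_def E_def by auto
        have "G d = 1 \<or> G d = -1" unfolding G_def by (auto simp: minus_one_power_iff)
        then show ?thesis using nO False d by (auto simp: f_def)
      qed
    qed
  qed
  have SO: "\<And>x. x < v \<Longrightarrow> (\<Sum>b\<in>{b\<in>B. x\<in>b}. if b \<in> Ob then h (kof b mod 3) else 0) = h 0 + h 1 + h 2"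
  proof -
    fix x assume x: "x < v"
    define K where "K = {k\<in>{..<v}. x \<in> shift v k ` b3}"
    have "(\<Sum>b\<in>{b\<in>B. x\<in>b}. if b \<in> Ob then h (kof b mod 3) else 0) = (\<Sum>b\<in>{b\<in>{b\<in>B. x\<in>b}. b \<in> Ob}. h (kof b mod 3))"
      by (rule sum.inter_filter[symmetric]) (simp add: finB)
    also have "{b\<in>{b\<in>B. x\<in>b}. b \<in> Ob} = (\<lambda>k. shift v k ` b3) ` K"
      unfolding K_def Ob_def using OB Ob_def by auto
    also have "(\<Sum>b\<in>(\<lambda>k. shift v k ` b3) ` K. h (kof b mod 3)) = (\<Sum>k\<in>K. h (kof (shift v k ` b3) mod 3))"
    proof -
      have Ksub: "K \<subseteq> {..<v}" unfolding K_def by auto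
      show ?thesis using sum.reindex[OF inj_on_subset[OF inj Ksub], of "\<lambda>b. h (kof b mod 3)"] by simp
    qed
    also have "\<dots> = (\<Sum>k\<in>K. h (k mod 3))" using kof by (intro sum.cong) (auto simp: K_def)
    also have "K = (\<lambda>p. dd v p x) ` b3"
    proof
      show "K \<subseteq> (\<lambda>p. dd v p x) ` b3"
      proof
        fix k assume "k \<in> K"
        then obtain p where p: "p \<in> b3" "x = shift v k p" "k < v" unfolding K_def by auto
        have "dd v p x = k" using p sub3 x by (intro dd_unique) (auto simp: shift_def)
        then show "k \<in> (\<lambda>p. dd v p x) ` b3" using p(1) by (metis image_eqI)
      qed
      show "(\<lambda>p. dd v p x) ` b3 \<subseteq> K"
      proof
        fix k assume "k \<in> (\<lambda>p. dd v p x) ` b3"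
        then obtain p where p: "p \<in> b3" "k = dd v p x" by auto
        have pv: "p < v" using p sub3 by auto
        have "x = shift v k p" using dd_add[OF pv x] p by (simp add: shift_def)
        then show "k \<in> K" unfolding K_def using p dd_lt[OF v_pos] by auto
      qed
    qed
    also have "(\<Sum>k\<in>(\<lambda>p. dd v p x) ` b3. h (k mod 3)) = (\<Sum>p\<in>b3. h (dd v p x mod 3))"
    proof (rule sum.reindex_cong[where l="\<lambda>p. dd v p x"])
      show "inj_on (\<lambda>p. dd v p x) b3"
      proof (rule inj_onI)
        fix p q assume pq: "p \<in> b3" "q \<in> b3" "dd v p x = dd v q x"
        have l: "p < v" "q < v" using pq sub3 by auto
        have "(p + dd v p x) mod v = (q + dd v p x) mod v" using dd_add[OF l(1) x] dd_add[OF l(2) x] pq by simp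
        then show "p = q" using add_unique1 l by blast
      qed
    qed auto
    also have "\<dots> = h 0 + h 1 + h 2"
    proof -
      obtain p0 p1 p2 where ps: "b3 = {p0,p1,p2}" "p0 \<noteq> p1" "p1 \<noteq> p2" "p0 \<noteq> p2" "p0 < v" "p1 < v" "p2 < v"
        using triple[OF b3(1)] by blast
      have rd: "p0 mod 3 \<noteq> p1 mod 3 \<and> p0 mod 3 \<noteq> p2 mod 3 \<and> p1 mod 3 \<noteq> p2 mod 3"
        using b3(2) card3_distinct unfolding rc_def ps(1) by simp
      have res: "\<And>p. p < v \<Longrightarrow> (p + dd v p x) mod 3 = x mod 3"
        using dd_add x v_m by (metis dvd_triv_left mod_mod_cancel)
      have r: "dd v p0 x mod 3 \<noteq> dd v p1 x mod 3" "dd v p0 x mod 3 \<noteq> dd v p2 x mod 3" "dd v p1 x mod 3 \<noteq> dd v p2 x mod 3"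
        using rd res[of p0] res[of p1] res[of p2] ps mod3_helper2 by metis+
      have "(\<Sum>p\<in>b3. h (dd v p x mod 3)) = h (dd v p0 x mod 3) + h (dd v p1 x mod 3) + h (dd v p2 x mod 3)"
        unfolding ps(1) using ps by (simp add: add.assoc)
      also have "\<dots> = h 0 + h 1 + h 2" using r by (intro perm3_sum) auto
      finally show ?thesis .
    qed
    finally show "(\<Sum>b\<in>{b\<in>B. x\<in>b}. if b \<in> Ob then h (kof b mod 3) else 0) = h 0 + h 1 + h 2" .
  qed
  have A2: "\<forall>x\<in>{..<v}. (\<Sum>b\<in>{b\<in>B. x\<in>b}. f b) = 0"
  proof
    fix x assume x: "x \<in> {..<v}"
    have fe: "\<And>b. b \<in> {b\<in>B. x\<in>b} \<Longrightarrow> f b = (if b \<in> Ob then h (kof b mod 3) else 0) + (if short v b then 1 else 0) + gE v E b"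
    proof -
      fix b assume b: "b \<in> {b\<in>B. x\<in>b}"
      have "\<not> P b \<Longrightarrow> gE v E b = 0" using gE_notP[OF Pinv, of b G] b unfolding E_def R_def by auto
      then show "f b = (if b \<in> Ob then h (kof b mod 3) else 0) + (if short v b then 1 else 0) + gE v E b"
        using Ons unfolding f_def P_def by auto
    qed
    have "(\<Sum>b\<in>{b\<in>B. x\<in>b}. f b) = (\<Sum>b\<in>{b\<in>B. x\<in>b}. if b \<in> Ob then h (kof b mod 3) else 0)
       + (\<Sum>b\<in>{b\<in>B. x\<in>b}. if short v b then 1 else 0) + (\<Sum>b\<in>{b\<in>B. x\<in>b}. gE v E b)"
      using fe by (simp add: sum.distrib)
    also have "\<dots> = (h 0 + h 1 + h 2) + 1 + 3 * (\<Sum>d\<in>{1..N}. E d)" using x SO sum_short gE_pointsum by simp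
    also have "(\<Sum>d\<in>{1..N}. E d) = S" unfolding E_def R_def S_def G_def using sumE by simp
    finally show "(\<Sum>b\<in>{b\<in>B. x\<in>b}. f b) = 0" using S by (auto simp: h_def a_def)
  qed
  have "zero_sum_flow 3 v B f" unfolding zero_sum_flow_def using A1 A2 by blast
  then show ?thesis unfolding admits_zero_sum_flow_def by blast
qed

end

theorem mainTheorem6:
  fixes v :: nat and B :: "nat set set"
  assumes "v mod 18 = 3 \<or> v mod 18 = 15"
    and "v > 3"
    and "is_cyclic_STS v B"
  shows "admits_zero_sum_flow 4 v B \<and>
         ((\<exists>Orb. full_orbit v B Orb \<and> (orbit_of_type 1 Orb \<or> orbit_of_type 3 Orb))
           \<longrightarrow> admits_zero_sum_flow 3 v B)"
proof -
  have v6: "v mod 6 = 3" using assms(1) by presburger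
  interpret csts v B by unfold_locales (use assms v6 in auto)
  have part2: "(\<exists>Orb. full_orbit v B Orb \<and> (orbit_of_type 1 Orb \<or> orbit_of_type 3 Orb))
           \<longrightarrow> admits_zero_sum_flow 3 v B"
  proof
    assume "\<exists>Orb. full_orbit v B Orb \<and> (orbit_of_type 1 Orb \<or> orbit_of_type 3 Orb)"
    then obtain Orb b where b: "b \<in> B" "Orb = block_orbit v b" "card Orb = v"
      and ty: "orbit_of_type 1 Orb \<or> orbit_of_type 3 Orb"
      unfolding full_orbit_def by blast
    have bo: "block_orbit v b = (\<lambda>k. shift v k ` b) ` {..<v}" unfolding block_orbit_def by auto
    have b0: "shift v 0 ` b = b" using shift_img_0 blockD b(1) by auto
    have bin: "b \<in> Orb" using b(2) bo b0 v_pos by (metis image_eqI lessThan_iff)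
    have "\<exists>b3\<in>B. rc b3 = 3 \<and> \<not> short v b3"
    proof (cases "orbit_of_type 1 Orb")
      case True then have "rc b = 1" using bin unfolding orbit_of_type_def rc_def by auto
      then show ?thesis using type3_from_type1 b(1) by blast
    next
      case False then have t3: "rc b = 3" using ty bin unfolding orbit_of_type_def rc_def by auto
      have "\<not> short v b"
      proof
        assume s: "short v b"
        have eq: "shift v 0 ` b = shift v m ` b" using s b0 unfolding short_def m_def by auto
        have "\<not> inj_on (\<lambda>k. shift v k ` b) {..<v}"
        proof
          assume inj: "inj_on (\<lambda>k. shift v k ` b) {..<v}"
          have "(0::nat) = m" by (rule inj_onD[OF inj eq]) (use v_pos m_lt in auto)
          then show False using m_ge by simp
        qed
        then have "card ((\<lambda>k. shift v k ` b) ` {..<v}) \<noteq> card {..<v}" using inj_on_iff_eq_card by blast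
        then show False using b bo by simp
      qed
      then show ?thesis using t3 b(1) by blast
    qed
    then show "admits_zero_sum_flow 3 v B" using flow3 by blast
  qed
  show ?thesis using flow4 part2 by blast
qed

end
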